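(* Let $P$ and $P'$ be simple polyhedra in $\mathbb{R}^3$ that are combinatorially equivalent to each other (with a fixed combinatorial equivalence). Suppose that each face of a natural development of $P$ is affine-equivalent to the corresponding face of a natural development of $P'$. Then $P$ and $P'$ are affine-equivalent.
   Context: A polyhedron is a connected two-dimensional polyhedral surface in $\mathbb{R}^3$ composed of finitely many convex polygons (its faces), connected in the sense that one can pass from any face to any other by crossing edges (not just vertices). A closed convex polyhedron is strictly convex if none of its dihedral angles equals $\pi$; a strictly convex closed polyhedron is simple if each of its vertices is incident to exactly three edges. Two polyhedra are combinatorially equivalent if there is an incidence-preserving bijection between their vertices, edges and faces. A natural development of a polyhedron $P$ is a finite collection of convex polygons in the plane in one-to-one correspondence with the faces of $P$, each polygon congruent to the corresponding face, such that two elements (faces, sides, vertices) of the collection are incident iff the corresponding elements of $P$ are incident. Two polygons (resp. two combinatorially equivalent polyhedra) are affine-equivalent if there is a nondegenerate affine map carrying the first onto the second and carrying each vertex, edge (and face) to the corresponding one. *)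

theory Defs
  imports "HOL-Analysis.Analysis"
begin

text \<open>A closed convex polyhedron in R^3 is represented by the convex body K it bounds:
a polytope (convex hull of finitely many points) with nonempty interior (aff_dim 3).
The polyhedral surface is the frontier of K.  Its vertices, edges and faces are the
faces of K (in the sense of face_of) of affine dimension 0, 1 and 2 respectively.
With this representation the polyhedron is automatically strictly convex (faces are
maximal planar pieces of the boundary).\<close>

definition convex_polyhedron3 :: "(real^3) set \<Rightarrow> bool" where
  "convex_polyhedron3 K \<longleftrightarrow> polytope K \<and> aff_dim K = 3"

definition cells :: "(real^3) set \<Rightarrow> (real^3) set set" where
  "cells K = {F. F face_of K \<and> 0 \<le> aff_dim F \<and> aff_dim F \<le> 2}"

definition is_vertex :: "real^3 \<Rightarrow> (real^3) set \<Rightarrow> bool" where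
  "is_vertex v K \<longleftrightarrow> {v} face_of K"

definition simple_polyhedron :: "(real^3) set \<Rightarrow> bool" where
  "simple_polyhedron K \<longleftrightarrow> convex_polyhedron3 K \<and>
     (\<forall>v. is_vertex v K \<longrightarrow> card {E. E edge_of K \<and> v \<in> E} = 3)"

definition comb_equiv :: "(real^3) set \<Rightarrow> (real^3) set \<Rightarrow> ((real^3) set \<Rightarrow> (real^3) set) \<Rightarrow> bool" where
  "comb_equiv K K' \<phi> \<longleftrightarrow> bij_betw \<phi> (cells K) (cells K') \<and>
     (\<forall>F\<in>cells K. aff_dim (\<phi> F) = aff_dim F) \<and>
     (\<forall>F\<in>cells K. \<forall>G\<in>cells K. F \<subseteq> G \<longleftrightarrow> \<phi> F \<subseteq> \<phi> G)"

text \<open>A natural development of K: for every face F of K a congruent copy in the plane,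
given by a map dev F that is distance-preserving on F; the polygon is dev F ` F, and
its vertices and sides are the images of the vertices and edges of K lying in F (so
that incidences in the development are exactly those of K).\<close>
definition natural_development :: "(real^3) set \<Rightarrow> ((real^3) set \<Rightarrow> real^3 \<Rightarrow> real^2) \<Rightarrow> bool" where
  "natural_development K dev \<longleftrightarrow>
     (\<forall>F. F facet_of K \<longrightarrow> (\<forall>x\<in>F. \<forall>y\<in>F. dist (dev F x) (dev F y) = dist x y))"

definition nondeg_affine :: "(real^'n \<Rightarrow> real^'n) \<Rightarrow> bool" where
  "nondeg_affine A \<longleftrightarrow> (\<exists>(M::real^'n^'n) c. invertible M \<and> A = (\<lambda>x. M *v x + c))"

definition developments_facewise_affine_equiv ::
  "(real^3) set \<Rightarrow> ((real^3) set \<Rightarrow> real^3 \<Rightarrow> real^2) \<Rightarrow>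
   (real^3) set \<Rightarrow> ((real^3) set \<Rightarrow> real^3 \<Rightarrow> real^2) \<Rightarrow>
   ((real^3) set \<Rightarrow> (real^3) set) \<Rightarrow> bool" where
  "developments_facewise_affine_equiv K dev K' dev' \<phi> \<longleftrightarrow>
     (\<forall>F. F facet_of K \<longrightarrow> (\<exists>A. nondeg_affine A \<and>
        A ` (dev F ` F) = dev' (\<phi> F) ` (\<phi> F) \<and>
        (\<forall>G\<in>cells K. G \<subseteq> F \<longrightarrow> A ` (dev F ` G) = dev' (\<phi> F) ` (\<phi> G))))"

definition polyhedra_affine_equiv ::
  "(real^3) set \<Rightarrow> (real^3) set \<Rightarrow> ((real^3) set \<Rightarrow> (real^3) set) \<Rightarrow> bool" where
  "polyhedra_affine_equiv K K' \<phi> \<longleftrightarrow>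
     (\<exists>A. nondeg_affine A \<and> A ` K = K' \<and> (\<forall>G\<in>cells K. A ` G = \<phi> G))"

end

theory Submission
  imports Defs
begin

lemma bary:
  fixes p y1 y2 y3 :: "'a::real_inner"
  assumes "l1 + l2 + l3 = 1"
  shows "(norm (p - (l1 *\<^sub>R y1 + l2 *\<^sub>R y2 + l3 *\<^sub>R y3)))\<^sup>2 =
    l1 * (norm (p - y1))\<^sup>2 + l2 * (norm (p - y2))\<^sup>2 + l3 * (norm (p - y3))\<^sup>2
    - (l1 * l2 * (norm (y1 - y2))\<^sup>2 + l1 * l3 * (norm (y1 - y3))\<^sup>2 + l2 * l3 * (norm (y2 - y3))\<^sup>2)"
proof -
  have l3: "l3 = 1 - l1 - l2" using assms by simp
  show ?thesis unfolding l3
    by (simp add: power2_norm_eq_inner inner_diff_left inner_diff_right inner_add_left inner_add_right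
        inner_commute algebra_simps)
qed

lemma affcomb_mat:
  fixes M :: "real^'n^'m"
  assumes "l1 + l2 + l3 = 1"
  shows "M *v (l1 *\<^sub>R x1 + l2 *\<^sub>R x2 + l3 *\<^sub>R x3) + c =
     l1 *\<^sub>R (M *v x1 + c) + l2 *\<^sub>R (M *v x2 + c) + l3 *\<^sub>R (M *v x3 + c)"
proof -
  have "c = l1 *\<^sub>R c + l2 *\<^sub>R c + l3 *\<^sub>R c"
    using assms by (metis scaleR_add_left scaleR_one)
  then show ?thesis
    by (simp add: matrix_vector_right_distrib matrix_vector_mult_scaleR algebra_simps)
qed


lemma two_facets_above:
  fixes S C :: "'a::euclidean_space set"
  assumes "polytope S" "C face_of S" "C \<noteq> {}" "aff_dim C < aff_dim S - 1"
  shows "\<exists>F G. F facet_of S \<and> G facet_of S \<and> F \<noteq> G \<and> C \<subseteq> F \<and> C \<subseteq> G"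
proof (rule ccontr)
  assume neg: "\<not> ?thesis"
  have "C \<noteq> S" using assms(4) by auto
  then have eq: "C = \<Inter>{F. F facet_of S \<and> C \<subseteq> F}"
    using face_of_polyhedron[OF polytope_imp_polyhedron[OF assms(1)] assms(2) assms(3)] by blast
  show False
  proof (cases "{F. F facet_of S \<and> C \<subseteq> F} = {}")
    case True
    then have "C = UNIV" using eq by (metis Inter_empty)
    then have "S = UNIV" using face_of_imp_subset[OF assms(2)] by auto
    then show False using \<open>C \<noteq> S\<close> \<open>C = UNIV\<close> by simp
  next
    case False
    then obtain F where F: "F facet_of S" "C \<subseteq> F" by blast
    then have "{F. F facet_of S \<and> C \<subseteq> F} = {F}" using neg by blast
    then have "C = F" using eq by simp
    then show False using F assms(4) by (simp add: facet_of_def)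
  qed
qed

locale poly3 =
  fixes K :: "(real^3) set"
  assumes polyK: "polytope K" and dimK: "aff_dim K = 3"
begin

lemma convK: "convex K" by (simp add: polyK polytope_imp_convex)
lemma compK: "compact K" by (simp add: polyK polytope_imp_compact)

lemma facet_iff: "F facet_of K \<longleftrightarrow> F face_of K \<and> aff_dim F = 2"
  using dimK by (auto simp: facet_of_def)

lemma edge_seg:
  assumes "e edge_of K"
  obtains a b where "a \<noteq> b" "e = closed_segment a b"
proof -
  have pe: "polytope e" using assms face_of_polytope_polytope polyK by (auto simp: edge_of_def)
  have d: "aff_dim e = 1" using assms by (simp add: edge_of_def)
  then have "e \<noteq> {}" by auto
  moreover have "collinear e" using d by (simp add: collinear_aff_dim)
  ultimately obtain a b where ab: "e = closed_segment a b"
    using compact_convex_collinear_segment pe polytope_imp_compact polytope_imp_convex by blast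
  moreover have "a \<noteq> b" using ab d by auto
  ultimately show ?thesis using that by blast
qed

lemma seg_endpoint_vertex:
  assumes "closed_segment a b face_of K"
  shows "{a} face_of K"
proof -
  have "a extreme_point_of closed_segment a b" by (simp add: extreme_point_of_segment)
  then have "{a} face_of closed_segment a b" by (simp add: face_of_singleton)
  then show ?thesis using assms face_of_trans by blast
qed

lemma vertex_in_seg:
  assumes "closed_segment a b face_of K" "{x} face_of K" "x \<in> closed_segment a b"
  shows "x = a \<or> x = b"
proof -
  have "{x} face_of closed_segment a b"
    using assms face_of_subset face_of_imp_subset by blast
  then show ?thesis by (simp add: face_of_singleton extreme_point_of_segment)
qed

lemma edge_at_vertex:
  assumes "e edge_of K" "{v} face_of K" "v \<in> e"
  obtains w where "w \<noteq> v" "{w} face_of K" "e = closed_segment v w"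
proof -
  obtain a b where ab: "a \<noteq> b" "e = closed_segment a b" using edge_seg assms(1) by blast
  have fe: "closed_segment a b face_of K" using assms(1) ab by (simp add: edge_of_def)
  have "v = a \<or> v = b" using vertex_in_seg[OF fe assms(2)] assms(3) ab by simp
  then show ?thesis
  proof
    assume "v = a" then show ?thesis using that[of b] ab seg_endpoint_vertex[of a b]
      fe seg_endpoint_vertex[of b a] by (auto simp: closed_segment_commute)
  next
    assume "v = b" then show ?thesis using that[of a] ab seg_endpoint_vertex[of a b]
      fe by (auto simp: closed_segment_commute)
  qed
qed

lemma face_has_vertex:
  assumes "F face_of K" "F \<noteq> {}"
  obtains x where "{x} face_of K" "x \<in> F"
proof -
  have "compact F" "convex F"
    using assms face_of_polytope_polytope polyK polytope_imp_compact polytope_imp_convex by blast+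
  then obtain x where "x extreme_point_of F" using extreme_point_exists_convex assms(2) by blast
  then have "x extreme_point_of K" "x \<in> F" using extreme_point_of_face[OF assms(1)] by auto
  then show ?thesis using that face_of_singleton by blast
qed

lemma edge_two_facets:
  assumes "e edge_of K"
  shows "\<exists>F G. F facet_of K \<and> G facet_of K \<and> F \<noteq> G \<and> e \<subseteq> F \<and> e \<subseteq> G"
proof -
  have "e \<noteq> {}" using assms by (auto simp: edge_of_def)
  then show ?thesis using assms two_facets_above[OF polyK, of e] dimK by (auto simp: edge_of_def)
qed

lemma facet_two_edges:
  assumes "H facet_of K" "{v} face_of K" "v \<in> H"
  shows "\<exists>e e'. e edge_of K \<and> e' edge_of K \<and> e \<noteq> e' \<and> v \<in> e \<and> v \<in> e' \<and> e \<subseteq> H \<and> e' \<subseteq> H"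
proof -
  have fH: "H face_of K" and dH: "aff_dim H = 2" using assms(1) facet_iff by auto
  have pH: "polytope H" using fH face_of_polytope_polytope polyK by blast
  have "{v} face_of H" using assms fH face_of_subset face_of_imp_subset by blast
  then obtain F G where FG: "F facet_of H" "G facet_of H" "F \<noteq> G" "{v} \<subseteq> F" "{v} \<subseteq> G"
    using two_facets_above[OF pH, of "{v}"] dH by auto
  have "F edge_of K" "G edge_of K"
    using FG dH fH face_of_trans by (auto simp: facet_of_def edge_of_def)
  then show ?thesis using FG facet_of_imp_subset by blast
qed

lemma two_edges_one_facet:
  assumes "e edge_of K" "e' edge_of K" "e \<noteq> e'" "e \<subseteq> H" "e' \<subseteq> H" "e \<subseteq> H'" "e' \<subseteq> H'"
    "H facet_of K" "H' facet_of K"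
  shows "H = H'"
proof (rule ccontr)
  assume ne: "H \<noteq> H'"
  have fH: "H face_of K" "aff_dim H = 2" "H' face_of K" "aff_dim H' = 2" using assms facet_iff by auto
  define I where "I = H \<inter> H'"
  have fI: "I face_of K" using fH face_of_Int I_def by blast
  have IH: "I \<subseteq> H" "I \<subseteq> H'" by (auto simp: I_def)
  have fIH: "I face_of H" using face_of_subset[OF fI IH(1) face_of_imp_subset[OF fH(1)]] .
  have cH: "convex H" using fH face_of_imp_convex by blast
  have "I \<noteq> H"
  proof
    assume "I = H"
    then have "H \<subseteq> H'" using IH by simp
    then have "H face_of H'" using face_of_subset[OF fH(1) _ face_of_imp_subset[OF fH(3)]] by blast
    moreover have "convex H'" using fH face_of_imp_convex by blast
    ultimately have "aff_dim H < aff_dim H'"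
      using face_of_aff_dim_lt ne by metis
    then show False using fH by simp
  qed
  then have lt: "aff_dim I < 2" using face_of_aff_dim_lt[OF cH fIH] fH by simp
  have cI: "convex I" using fI face_of_imp_convex by blast
  have ee: "x = I" if "x edge_of K" "x \<subseteq> I" for x
  proof (rule ccontr)
    assume "x \<noteq> I"
    have "x face_of K" using that by (simp add: edge_of_def)
    then have "x face_of I" using face_of_subset[OF _ that(2) face_of_imp_subset[OF fI]] by blast
    then have "aff_dim x < aff_dim I" using face_of_aff_dim_lt[OF cI _ \<open>x \<noteq> I\<close>] by blast
    moreover have "aff_dim x = 1" using that by (simp add: edge_of_def)
    ultimately show False using lt by simp
  qed
  have "e \<subseteq> I" using assms(4,6) by (simp add: I_def)
  then have "e = I" by (rule ee[OF assms(1)])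
  moreover have "e' \<subseteq> I" using assms(5,7) by (simp add: I_def)
  then have "e' = I" by (rule ee[OF assms(2)])
  ultimately show False using assms(3) by simp
qed

end

context poly3 begin

lemma subset_face_from_hull:
  assumes "F face_of K" "x \<in> K" "x \<in> affine hull F"
  shows "x \<in> F"
  using face_of_imp_eq_affine_Int[OF convK assms(1)] assms(2,3) by blast

lemma two_edges_indep:
  assumes e: "closed_segment v a edge_of K" and e': "closed_segment v b edge_of K"
    and ne: "closed_segment v a \<noteq> closed_segment v b" and va: "v \<noteq> a"
  shows "\<not> affine_dependent {v,a,b}"
proof
  assume dep: "affine_dependent {v,a,b}"
  have "collinear {v,a,b}" using dep collinear_3_eq_affine_dependent by blast
  then have b: "b \<in> affine hull {v,a}" using collinear_3_affine_hull[OF va] by blast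
  have cv: "convex (affine hull {v,a})" by (simp add: affine_imp_convex)
  have "v \<in> affine hull {v,a}" by (simp add: hull_inc)
  then have sub: "closed_segment v b \<subseteq> affine hull {v,a}"
    using closed_segment_subset[OF _ b cv] by blast
  have fe: "closed_segment v a face_of K" using e by (simp add: edge_of_def)
  have fe': "closed_segment v b face_of K" using e' by (simp add: edge_of_def)
  have "closed_segment v b \<subseteq> closed_segment v a"
  proof
    fix x assume x: "x \<in> closed_segment v b"
    then have "x \<in> K" using face_of_imp_subset[OF fe'] by blast
    moreover have "x \<in> affine hull (closed_segment v a)" using sub x by auto
    ultimately show "x \<in> closed_segment v a" using subset_face_from_hull[OF fe] by blast
  qed
  then have "closed_segment v b face_of closed_segment v a"
    using face_of_subset[OF fe' _ face_of_imp_subset[OF fe]] by blast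
  then have "aff_dim (closed_segment v b) < aff_dim (closed_segment v a)"
    using face_of_aff_dim_lt[of "closed_segment v a" "closed_segment v b"] ne by auto
  then show False using e e' by (simp add: edge_of_def)
qed

end


locale spoly3 = poly3 +
  assumes simple: "\<And>v. {v} face_of K \<Longrightarrow> card {E. E edge_of K \<and> v \<in> E} = 3"
begin

lemma third_edge_unique:
  assumes "{v} face_of K" "e1 edge_of K" "e2 edge_of K" "e1 \<noteq> e2" "v \<in> e1" "v \<in> e2"
    "f edge_of K" "g edge_of K" "v \<in> f" "v \<in> g" "f \<notin> {e1,e2}" "g \<notin> {e1,e2}"
  shows "f = g"
proof (rule ccontr)
  assume "f \<noteq> g"
  let ?S = "{E. E edge_of K \<and> v \<in> E}"
  have c: "card ?S = 3" by (rule simple[OF assms(1)])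
  have fin: "finite ?S" by (rule card_ge_0_finite) (simp add: c)
  have sub: "{e1,e2,f,g} \<subseteq> ?S" using assms by auto
  have le: "card {e1,e2,f,g} \<le> card ?S" by (rule card_mono[OF fin sub])
  have "f \<noteq> e1" "f \<noteq> e2" "g \<noteq> e1" "g \<noteq> e2" using assms(11,12) by auto
  then have "card {e1,e2,f,g} = 4" using assms(4) \<open>f \<noteq> g\<close> by simp
  then show False using le c by simp
qed

lemma common_facet:
  assumes v: "{v} face_of K" and e: "e edge_of K" and e': "e' edge_of K" and ne: "e \<noteq> e'"
    and ve: "v \<in> e" and ve': "v \<in> e'"
  shows "\<exists>H. H facet_of K \<and> e \<subseteq> H \<and> e' \<subseteq> H"
proof (rule ccontr)
  assume neg: "\<not> ?thesis"
  obtain F G where FG: "F facet_of K" "G facet_of K" "F \<noteq> G" "e \<subseteq> F" "e \<subseteq> G"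
    using edge_two_facets[OF e] by blast
  have other: "\<exists>f. f edge_of K \<and> v \<in> f \<and> f \<subseteq> X \<and> f \<noteq> e" if X: "X facet_of K" "e \<subseteq> X" for X
  proof -
    have "v \<in> X" using X ve by blast
    then obtain f1 f2 where "f1 edge_of K" "f2 edge_of K" "f1 \<noteq> f2" "v \<in> f1" "v \<in> f2" "f1 \<subseteq> X" "f2 \<subseteq> X"
      using facet_two_edges[OF X(1) v] by blast
    then show ?thesis by metis
  qed
  obtain f where f: "f edge_of K" "v \<in> f" "f \<subseteq> F" "f \<noteq> e" using other[OF FG(1) FG(4)] by blast
  obtain g where g: "g edge_of K" "v \<in> g" "g \<subseteq> G" "g \<noteq> e" using other[OF FG(2) FG(5)] by blast
  have "f \<noteq> e'" using neg f(3) FG(1,4) by blast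
  moreover have "g \<noteq> e'" using neg g(3) FG(2,5) by blast
  ultimately have "f = g" using third_edge_unique[OF v e e' ne ve ve' f(1) g(1) f(2) g(2)] f(4) g(4) by blast
  then have "F = G" using two_edges_one_facet[OF e f(1) f(4)[symmetric] FG(4) f(3) FG(5) _ FG(1) FG(2)] g(3) by blast
  then show False using FG by simp
qed

lemma edge_ne: "closed_segment v a edge_of K \<Longrightarrow> v \<noteq> a"
  by (auto simp: edge_of_def)

lemma indep_core:
  assumes e1: "closed_segment v a1 edge_of K" and e2: "closed_segment v a2 edge_of K"
    and e3: "closed_segment v a3 edge_of K"
    and n12: "closed_segment v a1 \<noteq> closed_segment v a2"
    and n13: "closed_segment v a1 \<noteq> closed_segment v a3"
    and F: "F facet_of K" "closed_segment v a1 \<subseteq> F" "closed_segment v a2 \<subseteq> F"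
    and G: "G facet_of K" "closed_segment v a1 \<subseteq> G" "closed_segment v a3 \<subseteq> G"
    and FG: "F \<noteq> G"
  shows "\<not> affine_dependent {v,a1,a2,a3}"
proof -
  have i3: "\<not> affine_dependent {v,a1,a2}"
    by (rule two_edges_indep[OF e1 e2 n12 edge_ne[OF e1]])
  have fF: "F face_of K" using F(1) by (simp add: facet_of_def)
  have "a3 \<notin> affine hull {v,a1,a2}"
  proof
    assume a3: "a3 \<in> affine hull {v,a1,a2}"
    have "{v,a1,a2} \<subseteq> F" using F(2,3) ends_in_segment by blast
    then have "affine hull {v,a1,a2} \<subseteq> affine hull F" by (rule hull_mono)
    then have "a3 \<in> affine hull F" using a3 by blast
    moreover have "a3 \<in> K" using e3 edge_of_imp_subset ends_in_segment by blast
    ultimately have "a3 \<in> F" using subset_face_from_hull[OF fF] by blast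
    moreover have "v \<in> F" using F(2) ends_in_segment by blast
    moreover have "convex F" using fF face_of_imp_convex by blast
    ultimately have "closed_segment v a3 \<subseteq> F" using closed_segment_subset by blast
    then have "F = G" using two_edges_one_facet[OF e1 e3 n13 F(2) _ G(2) G(3) F(1) G(1)] by blast
    then show False using FG by simp
  qed
  then have "\<not> affine_dependent (insert a3 {v,a1,a2})" using affine_independent_insert i3 by blast
  moreover have "insert a3 {v,a1,a2} = {v,a1,a2,a3}" by auto
  ultimately show ?thesis by simp
qed

lemma simple_vertex_indep:
  assumes v: "{v} face_of K"
    and e1: "closed_segment v a1 edge_of K" and e2: "closed_segment v a2 edge_of K"
    and e3: "closed_segment v a3 edge_of K"
    and n12: "closed_segment v a1 \<noteq> closed_segment v a2"
    and n13: "closed_segment v a1 \<noteq> closed_segment v a3"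
    and n23: "closed_segment v a2 \<noteq> closed_segment v a3"
  shows "\<not> affine_dependent {v,a1,a2,a3}"
proof -
  let ?e1 = "closed_segment v a1" and ?e2 = "closed_segment v a2" and ?e3 = "closed_segment v a3"
  let ?S = "{E. E edge_of K \<and> v \<in> E}"
  have c: "card ?S = 3" by (rule simple[OF v])
  have fin: "finite ?S" by (rule card_ge_0_finite) (simp add: c)
  have sub: "{?e1,?e2,?e3} \<subseteq> ?S" using e1 e2 e3 by auto
  have c3: "card {?e1,?e2,?e3} = 3" using n12 n13 n23 by simp
  have Seq: "?S = {?e1,?e2,?e3}"
    using card_subset_eq[OF fin sub] c c3 by simp
  obtain F G where FG: "F facet_of K" "G facet_of K" "F \<noteq> G" "?e1 \<subseteq> F" "?e1 \<subseteq> G"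
    using edge_two_facets[OF e1] by blast
  have other: "\<exists>f. f \<in> {?e2, ?e3} \<and> f \<subseteq> X" if X: "X facet_of K" "?e1 \<subseteq> X" for X
  proof -
    have "v \<in> X" using X ends_in_segment by blast
    then obtain f1 f2 where f: "f1 edge_of K" "f2 edge_of K" "f1 \<noteq> f2" "v \<in> f1" "v \<in> f2" "f1 \<subseteq> X" "f2 \<subseteq> X"
      using facet_two_edges[OF X(1) v] by blast
    have "f1 \<in> {?e1,?e2,?e3}" "f2 \<in> {?e1,?e2,?e3}" using f Seq by blast+
    then show ?thesis using f(3,6,7) by blast
  qed
  obtain f where f: "f \<in> {?e2, ?e3}" "f \<subseteq> F" using other[OF FG(1) FG(4)] by blast
  obtain g where g: "g \<in> {?e2, ?e3}" "g \<subseteq> G" using other[OF FG(2) FG(5)] by blast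
  have "f \<noteq> g"
  proof
    assume "f = g"
    have fe: "f edge_of K" using f e2 e3 by blast
    have "f \<noteq> ?e1" using f n12 n13 by blast
    then have "F = G" using two_edges_one_facet[OF e1 fe _ FG(4) f(2) FG(5) _ FG(1) FG(2)] g \<open>f = g\<close> by blast
    then show False using FG by simp
  qed
  then have "(f = ?e2 \<and> g = ?e3) \<or> (f = ?e3 \<and> g = ?e2)" using f g by blast
  then show ?thesis
  proof
    assume "f = ?e2 \<and> g = ?e3"
    then show ?thesis using indep_core[OF e1 e2 e3 n12 n13 FG(1) FG(4) _ FG(2) FG(5) _ FG(3)] f g by blast
  next
    assume "f = ?e3 \<and> g = ?e2"
    then have "\<not> affine_dependent {v,a1,a3,a2}"
      using indep_core[OF e1 e3 e2 n13 n12 FG(1) FG(4) _ FG(2) FG(5) _ FG(3)] f g by blast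
    moreover have "{v,a1,a3,a2} = {v,a1,a2,a3}" by auto
    ultimately show ?thesis by simp
  qed
qed

end

lemma connected_cover_prop:
  fixes X :: "'a::topological_space set"
  assumes "connected X" "finite \<F>" "\<And>S. S \<in> \<F> \<Longrightarrow> closed S" "\<Union>\<F> = X"
    "S0 \<in> \<F>" "P S0" "\<And>S S'. S \<in> \<F> \<Longrightarrow> S' \<in> \<F> \<Longrightarrow> P S \<Longrightarrow> S \<inter> S' \<noteq> {} \<Longrightarrow> P S'"
    "S \<in> \<F>" "\<And>S. S \<in> \<F> \<Longrightarrow> S \<noteq> {}"
  shows "P S"
proof (rule ccontr)
  assume nP: "\<not> P S"
  define A where "A = \<Union>{T\<in>\<F>. P T}"
  define B where "B = \<Union>{T\<in>\<F>. \<not> P T}"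
  have fA: "finite {T\<in>\<F>. P T}" "finite {T\<in>\<F>. \<not> P T}" using assms(2) by auto
  have "closed A" unfolding A_def using fA(1) assms(3) by (intro closed_Union) auto
  moreover have "closed B" unfolding B_def using fA(2) assms(3) by (intro closed_Union) auto
  moreover have "X \<subseteq> A \<union> B" unfolding A_def B_def using assms(4) by auto
  moreover have "A \<inter> B = {}"
  proof (rule ccontr)
    assume "A \<inter> B \<noteq> {}"
    then obtain x T T' where "T \<in> \<F>" "P T" "T' \<in> \<F>" "\<not> P T'" "x \<in> T" "x \<in> T'"
      unfolding A_def B_def by auto
    then show False using assms(7)[of T T'] by auto
  qed
  moreover have "A \<inter> X \<noteq> {}"
  proof -
    have "S0 \<noteq> {}" using assms(9)[OF assms(5)] .
    then obtain x where "x \<in> S0" by auto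
    then have "x \<in> A" "x \<in> X" unfolding A_def using assms(4,5,6) by auto
    then show ?thesis by auto
  qed
  moreover have "B \<inter> X \<noteq> {}"
  proof -
    have "S \<noteq> {}" using assms(9)[OF assms(8)] .
    then obtain x where "x \<in> S" by auto
    then have "x \<in> B" "x \<in> X" unfolding B_def using assms(4,8) nP by auto
    then show ?thesis by auto
  qed
  moreover have "A \<inter> B \<inter> X = {}" using \<open>A \<inter> B = {}\<close> by simp
  ultimately have "\<not> connected X" unfolding connected_closed by blast
  then show False using assms(1) by simp
qed


lemma basis_from_affine:
  fixes v a1 a2 a3 :: "real^3"
  assumes ind: "\<not> affine_dependent {v,a1,a2,a3}" and c4: "card {v,a1,a2,a3} = 4"
  shows "independent {a1 - v, a2 - v, a3 - v}" "card {a1 - v, a2 - v, a3 - v} = 3"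
    "span {a1 - v, a2 - v, a3 - v} = UNIV"
proof -
  have d: "v \<noteq> a1" "v \<noteq> a2" "v \<noteq> a3" "a1 \<noteq> a2" "a1 \<noteq> a3" "a2 \<noteq> a3"
    using c4 by (auto simp: card_insert_if split: if_splits)
  have "v \<notin> {a1,a2,a3}" using d by auto
  from affine_dependent_iff_dependent[OF this] ind
  have "\<not> dependent ((\<lambda>x. -v + x) ` {a1,a2,a3})" by simp
  moreover have "(\<lambda>x. -v + x) ` {a1,a2,a3} = {a1 - v, a2 - v, a3 - v}" by auto
  ultimately show i: "independent {a1 - v, a2 - v, a3 - v}" by simp
  show c: "card {a1 - v, a2 - v, a3 - v} = 3" using d by auto
  have "UNIV \<subseteq> span {a1 - v, a2 - v, a3 - v}"
    by (rule card_ge_dim_independent) (use i c in auto)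
  then show "span {a1 - v, a2 - v, a3 - v} = UNIV" by auto
qed

lemma lin_map3:
  fixes x1 x2 x3 y1 y2 y3 :: "real^3"
  assumes "independent {x1,x2,x3}" "card {x1,x2,x3} = 3"
  shows "\<exists>g. linear g \<and> g x1 = y1 \<and> g x2 = y2 \<and> g x3 = y3"
proof -
  have d: "x1 \<noteq> x2" "x1 \<noteq> x3" "x2 \<noteq> x3" using assms(2) by (auto simp: card_insert_if split: if_splits)
  define f where "f x = (if x = x1 then y1 else if x = x2 then y2 else y3)" for x
  obtain g where "linear g" "\<forall>x\<in>{x1,x2,x3}. g x = f x"
    using linear_independent_extend[OF assms(1)] by blast
  then show ?thesis using d by (intro exI[of _ g]) (auto simp: f_def)
qed

lemma affine_map_exists:
  fixes v a1 a2 a3 p b1 b2 b3 :: "real^3"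
  assumes A: "\<not> affine_dependent {v,a1,a2,a3}" "card {v,a1,a2,a3} = 4"
    and B: "\<not> affine_dependent {p,b1,b2,b3}" "card {p,b1,b2,b3} = 4"
  shows "\<exists>M c. invertible M \<and> M *v v + c = p \<and> M *v a1 + c = b1 \<and> M *v a2 + c = b2 \<and> M *v a3 + c = b3"
proof -
  note bA = basis_from_affine[OF A] and bB = basis_from_affine[OF B]
  obtain g where g: "linear g" "g (a1 - v) = b1 - p" "g (a2 - v) = b2 - p" "g (a3 - v) = b3 - p"
    using lin_map3[OF bA(1,2)] by blast
  obtain h where h: "linear h" "h (b1 - p) = a1 - v" "h (b2 - p) = a2 - v" "h (b3 - p) = a3 - v"
    using lin_map3[OF bB(1,2)] by blast
  have hg: "(h \<circ> g) x = id x" for x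
  proof (rule linear_eq_on_span[of "h \<circ> g" id "{a1 - v, a2 - v, a3 - v}"])
    show "linear (h \<circ> g)" using g(1) h(1) by (simp add: linear_compose)
    show "linear (id :: real^3 \<Rightarrow> real^3)" by (simp add: linear_id)
    show "x \<in> span {a1 - v, a2 - v, a3 - v}" using bA(3) by simp
    show "\<And>b. b \<in> {a1 - v, a2 - v, a3 - v} \<Longrightarrow> (h \<circ> g) b = id b" using g h by auto
  qed
  define M where "M = matrix g"
  have Mg: "M *v x = g x" for x unfolding M_def using matrix_vector_mul(2)[OF g(1)] by metis
  have "matrix h ** M = mat 1"
    unfolding M_def using matrix_compose[OF g(1) h(1)] hg
    by (metis matrix_id_mat_1 ext)
  then have inv: "invertible M" using invertible_left_inverse by blast
  define c where "c = p - g v"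
  have "M *v v + c = p" by (simp add: Mg c_def)
  moreover have "M *v a1 + c = b1" "M *v a2 + c = b2" "M *v a3 + c = b3"
    using g linear_diff[OF g(1)] by (auto simp: Mg c_def algebra_simps)
  ultimately show ?thesis using inv by blast
qed


lemma iso_comb:
  fixes f :: "'a::real_inner \<Rightarrow> 'b::real_inner"
  assumes iso: "\<forall>x\<in>S. \<forall>y\<in>S. dist (f x) (f y) = dist x y"
    and S: "p \<in> S" "y1 \<in> S" "y2 \<in> S" "y3 \<in> S" and l: "l1 + l2 + l3 = 1"
  shows "norm (f p - (l1 *\<^sub>R f y1 + l2 *\<^sub>R f y2 + l3 *\<^sub>R f y3)) = norm (p - (l1 *\<^sub>R y1 + l2 *\<^sub>R y2 + l3 *\<^sub>R y3))"
proof -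
  have dn: "norm (f x - f y) = norm (x - y)" if "x \<in> S" "y \<in> S" for x y
    using iso that by (simp add: dist_norm)
  have "(norm (f p - (l1 *\<^sub>R f y1 + l2 *\<^sub>R f y2 + l3 *\<^sub>R f y3)))\<^sup>2 = (norm (p - (l1 *\<^sub>R y1 + l2 *\<^sub>R y2 + l3 *\<^sub>R y3)))\<^sup>2"
    unfolding bary[OF l, of "f p"] bary[OF l, of p] using dn S by simp
  then show ?thesis by simp
qed

context poly3 begin

lemma hull_vertices:
  assumes "G face_of K"
  shows "G = convex hull {x. {x} face_of K \<and> x \<in> G}"
proof -
  have "compact G" "convex G"
    using assms face_of_polytope_polytope polyK polytope_imp_compact polytope_imp_convex by blast+
  then have "G = convex hull {x. x extreme_point_of G}" by (rule Krein_Milman_Minkowski)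
  moreover have "{x. x extreme_point_of G} = {x. {x} face_of K \<and> x \<in> G}"
    using extreme_point_of_face[OF assms] face_of_singleton by blast
  ultimately show ?thesis by simp
qed

lemma facet_polytope: "F facet_of K \<Longrightarrow> polytope F"
  using face_of_polytope_polytope polyK facet_of_imp_face_of by blast

lemma edge_facet_of_facet:
  assumes "e edge_of K" "F facet_of K" "e \<subseteq> F"
  shows "e facet_of F"
proof -
  have "e face_of F" using assms face_of_subset face_of_imp_subset by (metis edge_of_def facet_of_imp_face_of)
  moreover have "aff_dim F = 2" using assms facet_iff by blast
  moreover have "aff_dim e = 1" using assms by (simp add: edge_of_def)
  ultimately show ?thesis by (auto simp: facet_of_def)
qed

lemma facet_of_facet_edge:
  assumes "e facet_of F" "F facet_of K"
  shows "e edge_of K"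
proof -
  have "e face_of K" using assms face_of_trans facet_of_imp_face_of by blast
  moreover have "aff_dim F = 2" using assms facet_iff by blast
  ultimately show ?thesis using assms by (simp add: facet_of_def edge_of_def)
qed

end


locale mainloc =
  fixes K K' :: "(real^3) set"
    and \<phi> :: "(real^3) set \<Rightarrow> (real^3) set"
    and dev dev' :: "(real^3) set \<Rightarrow> real^3 \<Rightarrow> real^2"
  assumes sK: "simple_polyhedron K" and sK': "simple_polyhedron K'"
    and ce: "comb_equiv K K' \<phi>"
    and nd: "natural_development K dev" and nd': "natural_development K' dev'"
    and fa: "developments_facewise_affine_equiv K dev K' dev' \<phi>"
begin

sublocale A: spoly3 K
  using sK by unfold_locales (auto simp: simple_polyhedron_def convex_polyhedron3_def is_vertex_def)

sublocale B: spoly3 K'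
  using sK' by unfold_locales (auto simp: simple_polyhedron_def convex_polyhedron3_def is_vertex_def)

definition psi :: "real^3 \<Rightarrow> real^3" where "psi u = the_elem (\<phi> {u})"

lemma bij: "bij_betw \<phi> (cells K) (cells K')"
  and dimp: "\<And>F. F \<in> cells K \<Longrightarrow> aff_dim (\<phi> F) = aff_dim F"
  and incl: "\<And>F G. F \<in> cells K \<Longrightarrow> G \<in> cells K \<Longrightarrow> F \<subseteq> G \<longleftrightarrow> \<phi> F \<subseteq> \<phi> G"
  using ce by (auto simp: comb_equiv_def)

lemma cells_vertex: "{u} face_of K \<Longrightarrow> {u} \<in> cells K"
  by (simp add: cells_def)

lemma cells_edge: "e edge_of K \<Longrightarrow> e \<in> cells K"
  by (simp add: cells_def edge_of_def)

lemma cells_facet: "F facet_of K \<Longrightarrow> F \<in> cells K"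
  using A.facet_iff by (simp add: cells_def)

lemma phi_cell: "G \<in> cells K \<Longrightarrow> \<phi> G \<in> cells K'"
  using bij bij_betwE by blast

lemma phi_vertex:
  assumes "{u} face_of K"
  shows "\<phi> {u} = {psi u}" "{psi u} face_of K'"
proof -
  have c: "\<phi> {u} \<in> cells K'" using phi_cell cells_vertex assms by blast
  have "aff_dim (\<phi> {u}) = 0" using dimp cells_vertex assms by simp
  then obtain x where x: "\<phi> {u} = {x}" using aff_dim_eq_0 by blast
  then show "\<phi> {u} = {psi u}" by (simp add: psi_def)
  then show "{psi u} face_of K'" using c by (simp add: cells_def)
qed

lemma phi_facet: "F facet_of K \<Longrightarrow> \<phi> F facet_of K'"
  using phi_cell cells_facet dimp B.facet_iff A.facet_iff by (simp add: cells_def)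

lemma phi_edge: "e edge_of K \<Longrightarrow> \<phi> e edge_of K'"
  using phi_cell cells_edge dimp by (simp add: cells_def edge_of_def)

lemma mem_iff:
  assumes "{u} face_of K" "G \<in> cells K"
  shows "u \<in> G \<longleftrightarrow> psi u \<in> \<phi> G"
  using incl[OF cells_vertex[OF assms(1)] assms(2)] phi_vertex[OF assms(1)] by simp

lemma phi_inj: "F \<in> cells K \<Longrightarrow> G \<in> cells K \<Longrightarrow> \<phi> F = \<phi> G \<Longrightarrow> F = G"
  using bij by (auto simp: bij_betw_def inj_on_def)

lemma psi_inj: "{u} face_of K \<Longrightarrow> {w} face_of K \<Longrightarrow> psi u = psi w \<Longrightarrow> u = w"
  using phi_inj[OF cells_vertex cells_vertex] phi_vertex by (metis singleton_inject)

lemma psi_surj: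
  assumes "{x} face_of K'"
  shows "\<exists>u. {u} face_of K \<and> x = psi u"
proof -
  have "{x} \<in> cells K'" by (simp add: cells_def assms)
  then obtain G where G: "G \<in> cells K" "\<phi> G = {x}" using bij by (metis bij_betw_imp_surj_on imageE)
  then have "aff_dim G = 0" using dimp[OF G(1)] by simp
  then obtain u where "G = {u}" using aff_dim_eq_0 by blast
  then show ?thesis using G phi_vertex[of u] by (auto simp: cells_def)
qed

lemma phi_seg:
  assumes e: "closed_segment v a edge_of K"
  shows "\<phi> (closed_segment v a) = closed_segment (psi v) (psi a)"
proof -
  have fe: "closed_segment v a face_of K" using e by (simp add: edge_of_def)
  have vv: "{v} face_of K" "{a} face_of K"
    using A.seg_endpoint_vertex[OF fe] A.seg_endpoint_vertex[of a v] fe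
    by (auto simp: closed_segment_commute)
  have ce: "closed_segment v a \<in> cells K" using cells_edge e by blast
  have e': "\<phi> (closed_segment v a) edge_of K'" using phi_edge e by blast
  obtain p q where pq: "p \<noteq> q" "\<phi> (closed_segment v a) = closed_segment p q"
    using B.edge_seg[OF e'] by blast
  have fe': "closed_segment p q face_of K'" using e' pq by (simp add: edge_of_def)
  have pv: "{p} face_of K'" "{q} face_of K'"
    using B.seg_endpoint_vertex[OF fe'] B.seg_endpoint_vertex[of q p] fe'
    by (auto simp: closed_segment_commute)
  have inv: "x = psi v \<or> x = psi a" if X: "{x} face_of K'" "x \<in> closed_segment p q" for x
  proof -
    obtain u where u: "{u} face_of K" "x = psi u" using psi_surj X(1) by blast
    then have "u \<in> closed_segment v a" using mem_iff[OF u(1) ce] pq X by simp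
    then have "u = v \<or> u = a" using A.vertex_in_seg[OF fe u(1)] by blast
    then show ?thesis using u by blast
  qed
  have "p = psi v \<or> p = psi a" using inv[OF pv(1)] by simp
  moreover have "q = psi v \<or> q = psi a" using inv[OF pv(2)] by simp
  ultimately show ?thesis using pq by (auto simp: closed_segment_commute)
qed

end


context mainloc begin

lemma face_psi_comb:
  assumes F: "F facet_of K"
    and v: "{u1} face_of K" "{u2} face_of K" "{u3} face_of K" "{u} face_of K"
    and inF: "u1 \<in> F" "u2 \<in> F" "u3 \<in> F" "u \<in> F"
    and l: "l1 + l2 + l3 = 1" and ucomb: "u = l1 *\<^sub>R u1 + l2 *\<^sub>R u2 + l3 *\<^sub>R u3"
  shows "psi u = l1 *\<^sub>R psi u1 + l2 *\<^sub>R psi u2 + l3 *\<^sub>R psi u3"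
proof -
  have ex: "\<exists>A. nondeg_affine A \<and> A ` (dev F ` F) = dev' (\<phi> F) ` (\<phi> F) \<and>
        (\<forall>G\<in>cells K. G \<subseteq> F \<longrightarrow> A ` (dev F ` G) = dev' (\<phi> F) ` (\<phi> G))"
    using fa F unfolding developments_facewise_affine_equiv_def by (elim allE impE) assumption+
  then obtain A2 where A2c: "nondeg_affine A2 \<and> A2 ` (dev F ` F) = dev' (\<phi> F) ` (\<phi> F) \<and>
        (\<forall>G\<in>cells K. G \<subseteq> F \<longrightarrow> A2 ` (dev F ` G) = dev' (\<phi> F) ` (\<phi> G))"
    by (rule exE)
  have A2: "nondeg_affine A2"
    "\<And>G. G \<in> cells K \<Longrightarrow> G \<subseteq> F \<Longrightarrow> A2 ` (dev F ` G) = dev' (\<phi> F) ` (\<phi> G)"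
    using A2c by simp_all
  obtain M2 c2 where MA: "A2 = (\<lambda>x. M2 *v x + c2)" using A2(1) unfolding nondeg_affine_def by (elim exE conjE)
  have img: "A2 (dev F x) = dev' (\<phi> F) (psi x)" if "{x} face_of K" "x \<in> F" for x
  proof -
    have "A2 ` (dev F ` {x}) = dev' (\<phi> F) ` (\<phi> {x})"
      using A2(2)[OF cells_vertex[OF that(1)]] that(2) by blast
    then show ?thesis using phi_vertex[OF that(1)] by simp
  qed
  have isoF: "\<forall>x\<in>F. \<forall>y\<in>F. dist (dev F x) (dev F y) = dist x y"
    using nd F unfolding natural_development_def by (elim allE impE) assumption+
  have F': "\<phi> F facet_of K'" using phi_facet[OF F] .
  have isoF': "\<forall>x\<in>\<phi> F. \<forall>y\<in>\<phi> F. dist (dev' (\<phi> F) x) (dev' (\<phi> F) y) = dist x y"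
    using nd' F' unfolding natural_development_def by (elim allE impE) assumption+
  have "norm (dev F u - (l1 *\<^sub>R dev F u1 + l2 *\<^sub>R dev F u2 + l3 *\<^sub>R dev F u3)) = 0"
    using iso_comb[OF isoF inF(4) inF(1) inF(2) inF(3) l] ucomb by simp
  then have d: "dev F u = l1 *\<^sub>R dev F u1 + l2 *\<^sub>R dev F u2 + l3 *\<^sub>R dev F u3" by simp
  have "A2 (dev F u) = l1 *\<^sub>R A2 (dev F u1) + l2 *\<^sub>R A2 (dev F u2) + l3 *\<^sub>R A2 (dev F u3)"
    unfolding d MA by (rule affcomb_mat[OF l])
  then have d': "dev' (\<phi> F) (psi u) = l1 *\<^sub>R dev' (\<phi> F) (psi u1) + l2 *\<^sub>R dev' (\<phi> F) (psi u2) + l3 *\<^sub>R dev' (\<phi> F) (psi u3)"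
    using img v inF by simp
  have cF: "F \<in> cells K" using cells_facet[OF F] .
  have inF': "psi u1 \<in> \<phi> F" "psi u2 \<in> \<phi> F" "psi u3 \<in> \<phi> F" "psi u \<in> \<phi> F"
    using mem_iff[OF _ cF] v inF by blast+
  have "norm (psi u - (l1 *\<^sub>R psi u1 + l2 *\<^sub>R psi u2 + l3 *\<^sub>R psi u3)) = 0"
    using iso_comb[OF isoF' inF'(4) inF'(1) inF'(2) inF'(3) l] d' by simp
  then show ?thesis by simp
qed

lemma face_agree:
  assumes F: "F facet_of K"
    and v: "{u1} face_of K" "{u2} face_of K" "{u3} face_of K" "{u} face_of K"
    and inF: "u1 \<in> F" "u2 \<in> F" "u3 \<in> F" "u \<in> F"
    and ind: "\<not> affine_dependent {u1,u2,u3}" and c3: "card {u1,u2,u3} = 3"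
    and ag: "M *v u1 + c = psi u1" "M *v u2 + c = psi u2" "M *v u3 + c = psi u3"
  shows "M *v u + c = psi u"
proof -
  have "of_nat (card {u1,u2,u3}) = aff_dim {u1,u2,u3} + 1" using aff_dim_affine_independent[OF ind] .
  then have d3: "aff_dim {u1,u2,u3} = 2" using c3 by simp
  have dF: "aff_dim F = 2" using F A.facet_iff by blast
  have sub: "affine hull {u1,u2,u3} \<subseteq> affine hull F"
    by (rule hull_mono) (use inF in auto)
  have ne: "affine hull {u1,u2,u3} \<noteq> {}" by simp
  have ad: "aff_dim (affine hull {u1,u2,u3}) = aff_dim (affine hull F)"
    unfolding aff_dim_affine_hull using d3 dF by simp
  have eqh: "affine hull {u1,u2,u3} = affine hull F"
    using affine_dim_equal[OF affine_affine_hull affine_affine_hull ne sub ad] .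
  have "u \<in> affine hull F" by (rule hull_inc[OF inF(4)])
  then have "u \<in> affine hull {u1,u2,u3}" unfolding eqh .
  then obtain l1 l2 l3 where l: "l1 + l2 + l3 = 1" and uc: "u = l1 *\<^sub>R u1 + l2 *\<^sub>R u2 + l3 *\<^sub>R u3"
    unfolding affine_hull_3 by auto
  have "M *v u + c = l1 *\<^sub>R (M *v u1 + c) + l2 *\<^sub>R (M *v u2 + c) + l3 *\<^sub>R (M *v u3 + c)"
    unfolding uc by (rule affcomb_mat[OF l])
  also have "\<dots> = psi u" using face_psi_comb[OF F v inF l uc] ag by simp
  finally show ?thesis .
qed

end


lemma affine_convex_hull_image:
  fixes M :: "real^'n^'m"
  shows "(\<lambda>x. M *v x + c) ` (convex hull S) = convex hull ((\<lambda>x. M *v x + c) ` S)"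
proof -
  have l: "linear ((*v) M)" by (rule matrix_vector_mul_linear)
  have e1: "(\<lambda>x. M *v x + c) ` T = (\<lambda>y. c + y) ` ((*v) M ` T)" for T by (auto simp: image_image add.commute)
  show ?thesis unfolding e1 convex_hull_linear_image[OF l] convex_hull_translation ..
qed

context mainloc begin

definition good :: "real^3^3 \<Rightarrow> real^3 \<Rightarrow> real^3 \<Rightarrow> bool" where
  "good M c v \<longleftrightarrow> (\<forall>w. (w = v \<or> closed_segment v w edge_of K) \<longrightarrow> M *v w + c = psi w)"

lemma local_exists:
  assumes v: "{v} face_of K"
  shows "\<exists>M c. invertible M \<and> good M c v"
proof -
  let ?S = "{E. E edge_of K \<and> v \<in> E}"
  have "card ?S = 3" by (rule A.simple[OF v])
  then obtain e1 e2 e3 where S: "?S = {e1,e2,e3}" and d: "e1 \<noteq> e2" "e2 \<noteq> e3" "e1 \<noteq> e3"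
    unfolding card_3_iff by blast
  have ee: "e1 edge_of K" "v \<in> e1" "e2 edge_of K" "v \<in> e2" "e3 edge_of K" "v \<in> e3"
    using S by blast+
  obtain a1 where a1: "a1 \<noteq> v" "{a1} face_of K" "e1 = closed_segment v a1"
    using A.edge_at_vertex[OF ee(1) v ee(2)] by blast
  obtain a2 where a2: "a2 \<noteq> v" "{a2} face_of K" "e2 = closed_segment v a2"
    using A.edge_at_vertex[OF ee(3) v ee(4)] by blast
  obtain a3 where a3: "a3 \<noteq> v" "{a3} face_of K" "e3 = closed_segment v a3"
    using A.edge_at_vertex[OF ee(5) v ee(6)] by blast
  have ind: "\<not> affine_dependent {v,a1,a2,a3}"
    using A.simple_vertex_indep[OF v, of a1 a2 a3] ee a1 a2 a3 d by simp
  have ad: "a1 \<noteq> a2" "a1 \<noteq> a3" "a2 \<noteq> a3" using d a1 a2 a3 by auto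
  have c4: "card {v,a1,a2,a3} = 4" using ad a1 a2 a3 by auto
  have pe: "\<phi> e1 = closed_segment (psi v) (psi a1)" "\<phi> e2 = closed_segment (psi v) (psi a2)"
    "\<phi> e3 = closed_segment (psi v) (psi a3)"
    using phi_seg ee a1 a2 a3 by simp_all
  have pe': "\<phi> e1 edge_of K'" "\<phi> e2 edge_of K'" "\<phi> e3 edge_of K'" using phi_edge ee by simp_all
  have ce: "e1 \<in> cells K" "e2 \<in> cells K" "e3 \<in> cells K" using cells_edge ee by simp_all
  have pd: "\<phi> e1 \<noteq> \<phi> e2" "\<phi> e2 \<noteq> \<phi> e3" "\<phi> e1 \<noteq> \<phi> e3"
    using phi_inj ce d by metis+
  have pv: "{psi v} face_of K'" using phi_vertex[OF v] by simp
  have ind': "\<not> affine_dependent {psi v, psi a1, psi a2, psi a3}"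
    using B.simple_vertex_indep[OF pv, of "psi a1" "psi a2" "psi a3"] pe pe' pd by simp
  have pd2: "psi v \<noteq> psi a1" "psi v \<noteq> psi a2" "psi v \<noteq> psi a3"
    "psi a1 \<noteq> psi a2" "psi a1 \<noteq> psi a3" "psi a2 \<noteq> psi a3"
    using psi_inj v a1 a2 a3 ad by metis+
  have c4': "card {psi v, psi a1, psi a2, psi a3} = 4" using pd2 by auto
  obtain M c where Mc: "invertible M" "M *v v + c = psi v" "M *v a1 + c = psi a1"
    "M *v a2 + c = psi a2" "M *v a3 + c = psi a3"
    using affine_map_exists[OF ind c4 ind' c4'] by blast
  have "good M c v"
    unfolding good_def
  proof (intro allI impI)
    fix w assume w: "w = v \<or> closed_segment v w edge_of K"
    show "M *v w + c = psi w"
    proof (cases "w = v")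
      case True then show ?thesis using Mc by simp
    next
      case False
      then have we: "closed_segment v w edge_of K" using w by simp
      then have "closed_segment v w \<in> ?S" by simp
      then have "closed_segment v w \<in> {e1,e2,e3}" using S by simp
      then have "w = a1 \<or> w = a2 \<or> w = a3" using a1 a2 a3 False by (auto simp: doubleton_eq_iff)
      then show ?thesis using Mc by auto
    qed
  qed
  then show ?thesis using Mc(1) by blast
qed

end


context mainloc begin

lemma star_agree:
  assumes g: "good M c v" and v: "{v} face_of K" and H: "H facet_of K" "v \<in> H"
    and u: "{u} face_of K" "u \<in> H"
  shows "M *v u + c = psi u"
proof -
  obtain e e' where ee: "e edge_of K" "e' edge_of K" "e \<noteq> e'" "v \<in> e" "v \<in> e'" "e \<subseteq> H" "e' \<subseteq> H"
    using A.facet_two_edges[OF H(1) v H(2)] by blast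
  obtain a where a: "a \<noteq> v" "{a} face_of K" "e = closed_segment v a"
    using A.edge_at_vertex[OF ee(1) v ee(4)] by blast
  obtain b where b: "b \<noteq> v" "{b} face_of K" "e' = closed_segment v b"
    using A.edge_at_vertex[OF ee(2) v ee(5)] by blast
  have ind: "\<not> affine_dependent {v,a,b}"
    using A.two_edges_indep[of v a b] ee a b by simp
  have "a \<noteq> b" using ee(3) a b by auto
  then have c3: "card {v,a,b} = 3" using a b by auto
  have inH: "a \<in> H" "b \<in> H" using ee(6,7) a b ends_in_segment by blast+
  have ag: "M *v v + c = psi v" "M *v a + c = psi a" "M *v b + c = psi b"
    using g ee(1,2) a b unfolding good_def by auto
  show ?thesis by (rule face_agree[OF H(1) v a(2) b(2) u(1) H(2) inH u(2) ind c3 ag])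
qed

lemma seg_vertex2: "closed_segment v w edge_of K \<Longrightarrow> {w} face_of K"
  using A.seg_endpoint_vertex[of w v] by (simp add: edge_of_def closed_segment_commute)

lemma propagate:
  assumes g: "good M c v" and v: "{v} face_of K" and e: "closed_segment v w edge_of K"
  shows "good M c w"
  unfolding good_def
proof (intro allI impI)
  have w: "{w} face_of K" using seg_vertex2[OF e] .
  have wv: "w \<noteq> v" using A.edge_ne[OF e] by simp
  fix x assume x: "x = w \<or> closed_segment w x edge_of K"
  show "M *v x + c = psi x"
  proof (cases "x = w")
    case True then show ?thesis using g e unfolding good_def by auto
  next
    case False
    then have xe: "closed_segment w x edge_of K" using x by simp
    show ?thesis
    proof (cases "x = v")
      case True then show ?thesis using g unfolding good_def by auto
    next
      case xv: False
      have e': "closed_segment w v edge_of K" using e by (simp add: closed_segment_commute)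
      have ne: "closed_segment w v \<noteq> closed_segment w x" using xv wv False by (auto simp: doubleton_eq_iff)
      obtain H where H: "H facet_of K" "closed_segment w v \<subseteq> H" "closed_segment w x \<subseteq> H"
        using A.common_facet[OF w e' xe ne] by auto
      have "v \<in> H" "x \<in> H" using H ends_in_segment by blast+
      moreover have "{x} face_of K" using seg_vertex2[OF xe] .
      ultimately show ?thesis using star_agree[OF g v H(1)] by blast
    qed
  qed
qed

definition allgood where "allgood M c G \<longleftrightarrow> (\<forall>x. {x} face_of K \<and> x \<in> G \<longrightarrow> good M c x)"

lemma edge_allgood:
  assumes e: "e edge_of K" and x: "{x} face_of K" "x \<in> e" and g: "good M c x"
  shows "allgood M c e"
  unfolding allgood_def
proof (intro allI impI)
  fix y assume y: "{y} face_of K \<and> y \<in> e"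
  obtain z where z: "z \<noteq> x" "{z} face_of K" "e = closed_segment x z"
    using A.edge_at_vertex[OF e x] by blast
  have fe: "closed_segment x z face_of K" using e z by (simp add: edge_of_def)
  have "y = x \<or> y = z" using A.vertex_in_seg[OF fe] y z by blast
  moreover have "good M c z" using propagate[OF g x(1), of z] e z by simp
  ultimately show "good M c y" using g by blast
qed

lemma facet_allgood:
  assumes F: "F facet_of K" and v: "{v} face_of K" "v \<in> F" and g: "good M c v"
  shows "allgood M c F"
proof -
  have pF: "polytope F" using A.facet_polytope[OF F] .
  have cF: "convex F" "bounded F" "closed F"
    using pF polytope_imp_convex polytope_imp_bounded polytope_imp_closed by blast+
  have dF: "aff_dim F = 2" using F A.facet_iff by blast
  let ?\<F> = "{G. G facet_of F}"
  have conn: "connected (rel_frontier F)" by (rule connected_sphere_gen) (use cF dF in auto)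
  have fin: "finite ?\<F>" using finite_polytope_facets[OF pF] .
  have cl: "closed G" if "G \<in> ?\<F>" for G
    using face_of_imp_closed[OF cF(1) cF(3)] that facet_of_imp_face_of by blast
  have un: "\<Union>?\<F> = rel_frontier F"
    using rel_frontier_of_polyhedron[OF polytope_imp_polyhedron[OF pF]] by simp
  have nem: "G \<noteq> {}" if "G \<in> ?\<F>" for G using that by (simp add: facet_of_def)
  have ed: "G edge_of K" if "G \<in> ?\<F>" for G using A.facet_of_facet_edge that F by blast
  have vedge: "\<exists>e. e \<in> ?\<F> \<and> x \<in> e" if X: "{x} face_of K" "x \<in> F" for x
  proof -
    obtain e e' where "e edge_of K" "x \<in> e" "e \<subseteq> F"
      using A.facet_two_edges[OF F X] by blast
    then show ?thesis using A.edge_facet_of_facet F by blast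
  qed
  obtain e0 where e0: "e0 \<in> ?\<F>" "v \<in> e0" using vedge v by blast
  have P0: "allgood M c e0" using edge_allgood[OF ed[OF e0(1)] v(1) e0(2) g] .
  have step: "allgood M c G'" if GG: "G \<in> ?\<F>" "G' \<in> ?\<F>" "allgood M c G" "G \<inter> G' \<noteq> {}" for G G'
  proof -
    have "G face_of K" "G' face_of K" using ed[OF GG(1)] ed[OF GG(2)] by (simp_all add: edge_of_def)
    then have "(G \<inter> G') face_of K" by (rule face_of_Int)
    then obtain x where x: "{x} face_of K" "x \<in> G \<inter> G'" using A.face_has_vertex GG(4) by blast
    then have "good M c x" using GG(3) unfolding allgood_def by blast
    then show ?thesis using edge_allgood[OF ed[OF GG(2)] x(1)] x(2) by blast
  qed
  show ?thesis unfolding allgood_def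
  proof (intro allI impI)
    fix u assume u: "{u} face_of K \<and> u \<in> F"
    then obtain e where e: "e \<in> ?\<F>" "u \<in> e" using vedge by blast
    have "allgood M c e"
      using conn fin cl un e0(1) P0 step e(1) nem
      by (rule connected_cover_prop[of "rel_frontier F" ?\<F> e0 "allgood M c" e])
    then show "good M c u" using u e unfolding allgood_def by blast
  qed
qed

lemma vertex_in_facet:
  assumes u: "{u} face_of K"
  shows "\<exists>F. F facet_of K \<and> u \<in> F"
proof -
  have c: "card {E. E edge_of K \<and> u \<in> E} = 3" by (rule A.simple[OF u])
  have "{E. E edge_of K \<and> u \<in> E} \<noteq> {}"
  proof
    assume "{E. E edge_of K \<and> u \<in> E} = {}"
    then have "card {E. E edge_of K \<and> u \<in> E} = 0" by (simp only: card.empty)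
    then show False using c by simp
  qed
  then obtain e where "e edge_of K" "u \<in> e" by blast
  then show ?thesis using A.edge_two_facets by blast
qed

lemma global_good:
  assumes v0: "{v0} face_of K" and g: "good M c v0" and u: "{u} face_of K"
  shows "good M c u"
proof -
  let ?\<F> = "{F. F facet_of K}"
  have cK: "convex K" "bounded K" "closed K"
    using A.polyK polytope_imp_convex polytope_imp_bounded polytope_imp_closed by blast+
  have conn: "connected (rel_frontier K)" by (rule connected_sphere_gen) (use cK A.dimK in auto)
  have fin: "finite ?\<F>" using finite_polytope_facets[OF A.polyK] .
  have cl: "closed G" if "G \<in> ?\<F>" for G
    using face_of_imp_closed[OF cK(1) cK(3)] that facet_of_imp_face_of by blast
  have un: "\<Union>?\<F> = rel_frontier K"
    using rel_frontier_of_polyhedron[OF polytope_imp_polyhedron[OF A.polyK]] by simp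
  have nem: "G \<noteq> {}" if "G \<in> ?\<F>" for G using that by (simp add: facet_of_def)
  obtain F0 where F0: "F0 facet_of K" "v0 \<in> F0" using vertex_in_facet[OF v0] by blast
  have P0: "allgood M c F0" using facet_allgood[OF F0(1) v0 F0(2) g] .
  have step: "allgood M c G'" if GG: "G \<in> ?\<F>" "G' \<in> ?\<F>" "allgood M c G" "G \<inter> G' \<noteq> {}" for G G'
  proof -
    have "G face_of K" "G' face_of K" using GG(1,2) facet_of_imp_face_of by auto
    then have "(G \<inter> G') face_of K" by (rule face_of_Int)
    then obtain x where x: "{x} face_of K" "x \<in> G \<inter> G'" using A.face_has_vertex GG(4) by blast
    then have "good M c x" using GG(3) unfolding allgood_def by blast
    then show ?thesis using facet_allgood[of G' x] GG(2) x by blast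
  qed
  obtain F where F: "F facet_of K" "u \<in> F" using vertex_in_facet[OF u] by blast
  have "allgood M c F"
    using conn fin cl un _ P0 step _ nem
    by (rule connected_cover_prop[of "rel_frontier K" ?\<F> F0 "allgood M c" F]) (use F0 F in auto)
  then show ?thesis using u F unfolding allgood_def by blast
qed

end


context mainloc begin

lemma conclusion: "polyhedra_affine_equiv K K' \<phi>"
proof -
  have "K \<noteq> {}" using A.dimK by auto
  moreover have "K face_of K" using A.convK face_of_refl by blast
  ultimately obtain v0 where v0: "{v0} face_of K" "v0 \<in> K" using A.face_has_vertex by blast
  obtain M c where Mc: "invertible M" "good M c v0" using local_exists[OF v0(1)] by blast
  define T where "T = (\<lambda>x. M *v x + c)"
  have Tv: "T u = psi u" if "{u} face_of K" for u
    using global_good[OF v0(1) Mc(2) that] unfolding good_def T_def by blast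
  have nT: "nondeg_affine T" unfolding nondeg_affine_def T_def using Mc(1) by blast
  have img: "T ` {x. {x} face_of K \<and> x \<in> G} = {y. {y} face_of K' \<and> y \<in> G'}"
    if mem: "\<And>u. {u} face_of K \<Longrightarrow> u \<in> G \<longleftrightarrow> psi u \<in> G'" for G G'
  proof
    show "T ` {x. {x} face_of K \<and> x \<in> G} \<subseteq> {y. {y} face_of K' \<and> y \<in> G'}"
      using Tv mem phi_vertex by auto
    show "{y. {y} face_of K' \<and> y \<in> G'} \<subseteq> T ` {x. {x} face_of K \<and> x \<in> G}"
    proof
      fix y assume y: "y \<in> {y. {y} face_of K' \<and> y \<in> G'}"
      then obtain u where u: "{u} face_of K" "y = psi u" using psi_surj by blast
      then have "u \<in> G" using mem y by blast
      then show "y \<in> T ` {x. {x} face_of K \<and> x \<in> G}" using u Tv by auto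
    qed
  qed
  have hullT: "T ` (convex hull S) = convex hull (T ` S)" for S
    unfolding T_def by (rule affine_convex_hull_image)
  have "T ` K = K'"
  proof -
    have memK: "u \<in> K \<longleftrightarrow> psi u \<in> K'" if "{u} face_of K" for u
      using that phi_vertex[OF that] face_of_imp_subset by blast
    have "T ` K = T ` (convex hull {x. {x} face_of K \<and> x \<in> K})"
      using A.hull_vertices[OF \<open>K face_of K\<close>] by simp
    also have "\<dots> = convex hull {y. {y} face_of K' \<and> y \<in> K'}"
      using img[OF memK] by (simp add: hullT)
    also have "\<dots> = K'"
      using B.hull_vertices[of K'] B.convK face_of_refl by metis
    finally show ?thesis .
  qed
  moreover have "T ` G = \<phi> G" if G: "G \<in> cells K" for G
  proof -
    have fG: "G face_of K" using G by (simp add: cells_def)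
    have fG': "\<phi> G face_of K'" using phi_cell[OF G] by (simp add: cells_def)
    have memG: "u \<in> G \<longleftrightarrow> psi u \<in> \<phi> G" if "{u} face_of K" for u
      using mem_iff[OF that G] .
    have "T ` G = T ` (convex hull {x. {x} face_of K \<and> x \<in> G})"
      using A.hull_vertices[OF fG] by simp
    also have "\<dots> = convex hull {y. {y} face_of K' \<and> y \<in> \<phi> G}"
      using img[OF memG] by (simp add: hullT)
    also have "\<dots> = \<phi> G"
      using B.hull_vertices[OF fG'] by simp
    finally show ?thesis .
  qed
  ultimately show ?thesis unfolding polyhedra_affine_equiv_def using nT by blast
qed

end

theorem theorem4:
  fixes K K' :: "(real^3) set"
    and \<phi> :: "(real^3) set \<Rightarrow> (real^3) set"
    and dev dev' :: "(real^3) set \<Rightarrow> real^3 \<Rightarrow> real^2"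
  assumes "simple_polyhedron K" and "simple_polyhedron K'"
    and "comb_equiv K K' \<phi>"
    and "natural_development K dev" and "natural_development K' dev'"
    and "developments_facewise_affine_equiv K dev K' dev' \<phi>"
  shows "polyhedra_affine_equiv K K' \<phi>"
proof -
  interpret mainloc K K' \<phi> dev dev'
    by (unfold_locales) (rule assms)+
  show ?thesis by (rule conclusion)
qed


end
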